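(* Fix an iteration $t$, an agent $p$, and a realization $\xi\in\mathbb{R}^{J\times K}$ of the noise. Let $w^{t+1},\lambda^t_p,z^t_p\in\mathbb{R}^{J\times K}$, $\rho^t>0$, $\eta^t>0$ be given, and set $$\Phi(z)=\langle f'_p(z^t_p;\mathcal{D}_p),z\rangle+\tfrac{\rho^t}{2}\big\|w^{t+1}-z+\tfrac1{\rho^t}(\lambda^t_p-\xi)\big\|^2+\tfrac1{2\eta^t}\|z-z^t_p\|^2 .$$ Let $z^{t+1}_p(\mathcal{D}_p)=\operatorname{argmin}_{z\in\mathcal{W}}\Phi(z)$ and, for $\ell>0$, $z^{t+1}_p(\ell,\mathcal{D}_p)=\operatorname{argmin}_{z\in\mathbb{R}^{J\times K}}\Phi(z)+\sum_{m=1}^M\ln(1+e^{\ell h_m(z)})$. Then $\lim_{\ell\to\infty}z^{t+1}_p(\ell,\mathcal{D}_p)=z^{t+1}_p(\mathcal{D}_p)$.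
   Context: $\mathbb{R}^{J\times K}$ carries the Frobenius inner product and norm. $\mathcal{D}_p$ is a dataset, $f_p(\cdot;\mathcal{D}_p)$ a convex function on $\mathbb{R}^{J\times K}$ (the local empirical risk $\frac1I\sum_{i}\varphi(z;x_{pi},y_{pi})+\frac\beta Pr(z)$ with convex loss $\varphi$, convex regularizer $r$, $\beta>0$), and $f'_p(z^t_p;\mathcal{D}_p)$ a subgradient of it at $z^t_p$. $\mathcal{W}\subset\mathbb{R}^{J\times K}$ is compact convex with $\mathcal{W}=\{z:h_m(z)\le0,\ m\in[M]\}$, each $h_m$ convex and twice continuously differentiable. Both minimization problems have strongly convex objectives and hence unique minimizers. *)

theory Defs
  imports "HOL-Analysis.Analysis"
begin

text \<open>The matrix space R^{J x K} is rendered as real^'k^'j; its inner product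
  (sum of componentwise products) is the Frobenius inner product.\<close>

definition argmin_on :: "'a set \<Rightarrow> ('a \<Rightarrow> real) \<Rightarrow> 'a" where
  "argmin_on S F = (THE z. z \<in> S \<and> (\<forall>y\<in>S. F z \<le> F y))"

definition twice_cont_diff :: "('a::real_normed_vector \<Rightarrow> real) \<Rightarrow> bool" where
  "twice_cont_diff h \<longleftrightarrow> (\<exists>Dh :: 'a \<Rightarrow> ('a \<Rightarrow>\<^sub>L real). \<exists>D2h :: 'a \<Rightarrow> ('a \<Rightarrow>\<^sub>L ('a \<Rightarrow>\<^sub>L real)).
     (\<forall>x. (h has_derivative blinfun_apply (Dh x)) (at x)) \<and>
     (\<forall>x. (Dh has_derivative blinfun_apply (D2h x)) (at x)) \<and>
     continuous_on UNIV D2h)"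

definition is_subgradient :: "('a::real_inner \<Rightarrow> real) \<Rightarrow> 'a \<Rightarrow> 'a \<Rightarrow> bool" where
  "is_subgradient f x0 g \<longleftrightarrow> (\<forall>z. f x0 + inner g (z - x0) \<le> f z)"

end

theory Submission
  imports Defs
begin


lemma sp_pos: "0 < ln (1 + exp (x::real))"
  by (simp add: ln_gt_zero)

lemma sp_nz: "1 + exp (x::real) \<noteq> 0"
  using exp_gt_zero[of x] by linarith

lemma sp_ge: "x \<le> ln (1 + exp (x::real))"
proof -
  have "ln (exp x) \<le> ln (1 + exp x)" by (subst ln_le_cancel_iff) (auto simp: add_pos_pos)
  then show ?thesis by simp
qed

lemma sp_mono: "(x::real) \<le> y \<Longrightarrow> ln (1 + exp x) \<le> ln (1 + exp y)"
  by (subst ln_le_cancel_iff) (auto simp: add_pos_pos)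

lemma sp_le_ln2: "(x::real) \<le> 0 \<Longrightarrow> ln (1 + exp x) \<le> ln 2"
  by (subst ln_le_cancel_iff) (auto simp: add_pos_pos)

lemma sp_mid: "ln (1 + exp (((x::real) + y) / 2)) \<le> (ln (1 + exp x) + ln (1 + exp y)) / 2"
proof -
  define a where "a = exp (x/2)"
  define b where "b = exp (y/2)"
  have ex: "exp x = a^2" unfolding a_def by (simp add: power2_eq_square flip: exp_add)
  have ey: "exp y = b^2" unfolding b_def by (simp add: power2_eq_square flip: exp_add)
  have exy: "exp ((x+y)/2) = a * b" unfolding a_def b_def by (simp flip: exp_add add: add_divide_distrib)
  have pa: "a > 0" "b > 0" unfolding a_def b_def by auto
  have pb: "0 < 1 + a^2" "0 < 1 + b^2" by (auto intro: add_pos_nonneg)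
  have "(1 + a*b)^2 \<le> (1 + a^2) * (1 + b^2)"
  proof -
    have e: "(1 + a^2) * (1 + b^2) - (1 + a*b)^2 = (a - b)^2" by (simp add: power2_eq_square algebra_simps)
    have "0 \<le> (a - b)^2" by simp
    then show ?thesis using e by linarith
  qed
  then have "ln ((1 + a*b)^2) \<le> ln ((1 + a^2) * (1 + b^2))"
  proof -
    have "0 < a * b" using pa by simp
    then have "0 < 1 + a*b" "0 < 1 + a^2" "0 < 1 + b^2" by (auto intro: add_pos_nonneg)
    then show ?thesis using \<open>(1 + a*b)^2 \<le> (1 + a^2) * (1 + b^2)\<close> by (subst ln_le_cancel_iff) auto
  qed
  then have "2 * ln (1 + a*b) \<le> ln (1 + a^2) + ln (1 + b^2)"
    using pa pb by (simp add: ln_mult ln_realpow add_pos_pos)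
  then show ?thesis using ex ey exy by simp
qed

lemma dir_deriv:
  fixes h :: "'a::real_normed_vector \<Rightarrow> real"
  assumes "(h has_derivative D) (at x)"
  shows "((\<lambda>t. (h (x + t *\<^sub>R v) - h x) / t) \<longlongrightarrow> D v) (at 0)"
proof -
  have l: "linear D" using assms has_derivative_linear by blast
  have "((\<lambda>t. x + t *\<^sub>R v) has_derivative (\<lambda>t. t *\<^sub>R v)) (at 0)"
    by (auto intro!: derivative_eq_intros)
  moreover have "(h has_derivative D) (at (x + 0 *\<^sub>R v))" using assms by simp
  ultimately have "((\<lambda>t. h (x + t *\<^sub>R v)) has_derivative (\<lambda>t. D (t *\<^sub>R v))) (at 0)"
    using has_derivative_compose by fastforce
  moreover have "(\<lambda>t. D (t *\<^sub>R v)) = (\<lambda>t. t * D v)"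
    using l by (simp add: linear_scale)
  ultimately have "((\<lambda>t. h (x + t *\<^sub>R v)) has_field_derivative D v) (at 0)"
    unfolding has_field_derivative_def by (metis (no_types, lifting) ext mult.commute)
  then show ?thesis by (simp add: DERIV_def)
qed

lemma tangent_below:
  fixes h :: "'a::real_normed_vector \<Rightarrow> real"
  assumes c: "convex_on UNIV h" and d: "(h has_derivative D) (at x)"
  shows "h x + D (z - x) \<le> h z"
proof -
  have lim: "((\<lambda>t. (h (x + t *\<^sub>R (z - x)) - h x) / t) \<longlongrightarrow> D (z - x)) (at_right 0)"
    using dir_deriv[OF d] tendsto_mono at_le by (metis at_within_le_at)
  have ev: "eventually (\<lambda>t. (h (x + t *\<^sub>R (z - x)) - h x) / t \<le> h z - h x) (at_right 0)"
  proof -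
    have "eventually (\<lambda>t::real. 0 < t \<and> t < 1) (at_right 0)"
      by (intro eventually_conj eventually_at_right_less) (simp add: eventually_at_right_field exI[of _ 1])
    then show ?thesis
    proof (rule eventually_mono)
      fix t :: real assume t: "0 < t \<and> t < 1"
      have "x + t *\<^sub>R (z - x) = (1 - t) *\<^sub>R x + t *\<^sub>R z" by (simp add: algebra_simps)
      then have "h (x + t *\<^sub>R (z - x)) \<le> (1 - t) * h x + t * h z"
        using convex_onD[OF c, of t x z] t by simp
      then have "h (x + t *\<^sub>R (z - x)) - h x \<le> t * (h z - h x)" by (simp add: algebra_simps)
      then show "(h (x + t *\<^sub>R (z - x)) - h x) / t \<le> h z - h x"
        using t by (simp add: divide_le_eq mult.commute)
    qed
  qed
  have "D (z - x) \<le> h z - h x"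
    by (rule tendsto_le[OF _ tendsto_const lim ev]) simp
  then show ?thesis by simp
qed

lemma norm_mid:
  fixes a b c :: "'a::real_inner"
  shows "(norm (c - (1/2) *\<^sub>R (a + b)))\<^sup>2 = ((norm (c - a))\<^sup>2 + (norm (c - b))\<^sup>2) / 2 - (norm (a - b))\<^sup>2 / 4"
  by (simp add: power2_norm_eq_inner inner_simps inner_commute algebra_simps field_simps)



lemma argmin_eq:
  fixes G :: "'a::real_vector \<Rightarrow> real"
  assumes "z \<in> S" "\<forall>y\<in>S. G z \<le> G y"
    and "\<And>a b. a \<in> S \<Longrightarrow> b \<in> S \<Longrightarrow> a \<noteq> b \<Longrightarrow> (1/2) *\<^sub>R (a + b) \<in> S \<and> G ((1/2) *\<^sub>R (a + b)) < (G a + G b) / 2"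
  shows "argmin_on S G = z"
  unfolding argmin_on_def
proof (rule the_equality)
  show "z \<in> S \<and> (\<forall>y\<in>S. G z \<le> G y)" using assms by blast
next
  fix z' assume z': "z' \<in> S \<and> (\<forall>y\<in>S. G z' \<le> G y)"
  show "z' = z"
  proof (rule ccontr)
    assume ne: "z' \<noteq> z"
    then have "(1/2) *\<^sub>R (z' + z) \<in> S \<and> G ((1/2) *\<^sub>R (z' + z)) < (G z' + G z) / 2"
      using assms(3) z' assms(1) by blast
    moreover have "G z' \<le> G z" "G z \<le> G z'" using z' assms(1,2) by auto
    ultimately show False using z' by fastforce
  qed
qed

lemma exists_min:
  fixes G :: "'a::{heine_borel,real_normed_vector} \<Rightarrow> real"
  assumes c: "continuous_on UNIV G" and b: "\<And>z. G z \<le> G zb \<Longrightarrow> norm z \<le> r"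
  shows "\<exists>z. \<forall>y. G z \<le> G y"
proof -
  let ?S = "{z. G z \<le> G zb}"
  have "closed ?S" by (rule closed_Collect_le[OF c continuous_on_const])
  moreover have "bounded ?S" using b by (auto simp: bounded_iff)
  ultimately have "compact ?S" by (simp add: compact_eq_bounded_closed)
  moreover have "?S \<noteq> {}" by auto
  moreover have "continuous_on ?S G" using c continuous_on_subset by blast
  ultimately obtain x where x: "x \<in> ?S" "\<forall>y\<in>?S. G x \<le> G y"
    using continuous_attains_inf by blast
  have "G x \<le> G y" for y
  proof (cases "y \<in> ?S")
    case False then show ?thesis using x by auto
  qed (use x in auto)
  then show ?thesis by blast
qed



theorem proposition1:
  fixes f :: "real^'k^'j \<Rightarrow> real"
    and g w lam z\<^sub>t \<xi> :: "real^'k^'j"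
    and \<rho> \<eta> :: real
    and M :: nat
    and h :: "nat \<Rightarrow> real^'k^'j \<Rightarrow> real"
    and W :: "(real^'k^'j) set"
    and \<Phi> :: "real^'k^'j \<Rightarrow> real"
  assumes f_convex: "convex_on UNIV f"
    and g_subgrad: "is_subgradient f z\<^sub>t g"
    and rho_pos: "\<rho> > 0" and eta_pos: "\<eta> > 0"
    and h_convex: "\<And>m. m \<in> {1..M} \<Longrightarrow> convex_on UNIV (h m)"
    and h_C2: "\<And>m. m \<in> {1..M} \<Longrightarrow> twice_cont_diff (h m)"
    and W_def: "W = {z. \<forall>m\<in>{1..M}. h m z \<le> 0}"
    and W_compact: "compact W" and W_convex: "convex W" and W_nonempty: "W \<noteq> {}"
    and Phi_def: "\<Phi> = (\<lambda>z. inner g z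
        + \<rho> / 2 * (norm (w - z + (1 / \<rho>) *\<^sub>R (lam - \<xi>)))\<^sup>2
        + 1 / (2 * \<eta>) * (norm (z - z\<^sub>t))\<^sup>2)"
  shows "((\<lambda>l. argmin_on UNIV (\<lambda>z. \<Phi> z + (\<Sum>m=1..M. ln (1 + exp (l * h m z)))))
           \<longlongrightarrow> argmin_on W \<Phi>) at_top"
proof -
  define sp :: "real \<Rightarrow> real" where "sp x = ln (1 + exp x)" for x
  define F where "F l z = \<Phi> z + (\<Sum>m=1..M. sp (l * h m z))" for l z
  define cc where "cc = w + (1/\<rho>) *\<^sub>R (lam - \<xi>)"
  have Phi': "\<Phi> z = inner g z + \<rho>/2 * (norm (cc - z))\<^sup>2 + 1/(2*\<eta>) * (norm (z - z\<^sub>t))\<^sup>2" for z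
    unfolding Phi_def cc_def by (simp add: algebra_simps)
  define \<alpha> where "\<alpha> = (\<rho>/2 + 1/(2*\<eta>)) / 4"
  have \<alpha>_pos: "\<alpha> > 0" using rho_pos eta_pos by (simp add: \<alpha>_def add_pos_pos)
  have Phi_mid: "\<Phi> ((1/2) *\<^sub>R (a+b)) = (\<Phi> a + \<Phi> b)/2 - \<alpha> * (norm (a - b))\<^sup>2" for a b
  proof -
    have n1: "(norm (cc - (1/2) *\<^sub>R (a+b)))\<^sup>2 = ((norm (cc - a))\<^sup>2 + (norm (cc - b))\<^sup>2) / 2 - (norm (a - b))\<^sup>2 / 4"
      by (rule norm_mid)
    have n2: "(norm ((1/2) *\<^sub>R (a+b) - z\<^sub>t))\<^sup>2 = ((norm (a - z\<^sub>t))\<^sup>2 + (norm (b - z\<^sub>t))\<^sup>2)/2 - (norm (a-b))\<^sup>2/4"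
      using norm_mid[of z\<^sub>t a b] by (simp add: norm_minus_commute)
    have i: "inner g ((1/2) *\<^sub>R (a+b)) = (inner g a + inner g b) / 2" by (simp add: inner_simps)
    show ?thesis unfolding Phi' \<alpha>_def n1 n2 i using eta_pos rho_pos by (simp add: field_simps)
  qed
  have Phi_strict: "\<Phi> ((1/2) *\<^sub>R (a+b)) < (\<Phi> a + \<Phi> b)/2" if "a \<noteq> b" for a b
  proof -
    have "0 < (norm (a - b))\<^sup>2" using that by simp
    then have "0 < \<alpha> * (norm (a - b))\<^sup>2" using \<alpha>_pos by (rule mult_pos_pos[rotated])
    then show ?thesis using Phi_mid[of a b] by linarith
  qed
  have Phi_cont: "continuous_on UNIV \<Phi>" unfolding Phi_def by (intro continuous_intros)
  define Kc where "Kc = 2*\<eta>*(norm g)\<^sup>2 + (norm z\<^sub>t)\<^sup>2/(2*\<eta>)"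
  have Phi_coer: "(norm z)\<^sup>2/(8*\<eta>) - Kc \<le> \<Phi> z" for z
  proof -
    have a1: "- (norm g * norm z) \<le> inner g z" using Cauchy_Schwarz_ineq2[of g z] by linarith
    have a2: "0 \<le> \<rho>/2 * (norm (cc - z))\<^sup>2" using rho_pos by simp
    have "norm z \<le> norm (z - z\<^sub>t) + norm z\<^sub>t" using norm_triangle_ineq2[of z z\<^sub>t] by linarith
    then have "(norm z)\<^sup>2 \<le> (norm (z - z\<^sub>t) + norm z\<^sub>t)\<^sup>2" by (simp add: power_mono)
    also have "\<dots> \<le> 2 * (norm (z - z\<^sub>t))\<^sup>2 + 2 * (norm z\<^sub>t)\<^sup>2"
      using sum_squares_ge_zero[of "norm (z - z\<^sub>t) - norm z\<^sub>t" 0]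
      by (simp add: power2_eq_square algebra_simps)
    finally have a3: "(norm z)\<^sup>2 / 2 - (norm z\<^sub>t)\<^sup>2 \<le> (norm (z - z\<^sub>t))\<^sup>2" by simp
    have a4: "((norm z)\<^sup>2 / 2 - (norm z\<^sub>t)\<^sup>2) / (2*\<eta>) \<le> 1/(2*\<eta>) * (norm (z - z\<^sub>t))\<^sup>2"
      using a3 eta_pos by (simp add: divide_right_mono)
    have a5: "(norm z)\<^sup>2/(8*\<eta>) - Kc \<le> - (norm g * norm z) + ((norm z)\<^sup>2 / 2 - (norm z\<^sub>t)\<^sup>2) / (2*\<eta>)"
    proof -
      have "0 \<le> (norm z - 4*\<eta>*norm g)\<^sup>2 / (8*\<eta>)" using eta_pos by simp
      moreover have "(norm z - 4*\<eta>*norm g)\<^sup>2 / (8*\<eta>) = (- (norm g * norm z) + ((norm z)\<^sup>2 / 2 - (norm z\<^sub>t)\<^sup>2) / (2*\<eta>)) - ((norm z)\<^sup>2/(8*\<eta>) - Kc)"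
        unfolding Kc_def using eta_pos by (simp add: field_simps power2_eq_square)
      ultimately show ?thesis by linarith
    qed
    show ?thesis unfolding Phi' using a1 a2 a4 a5 by linarith
  qed
  have Phi_bdd: "norm z \<le> sqrt (8*\<eta>*(B + Kc))" if "\<Phi> z \<le> B" for z B
  proof -
    have "(norm z)\<^sup>2/(8*\<eta>) \<le> B + Kc" using Phi_coer[of z] that by linarith
    then have "(norm z)\<^sup>2 \<le> 8*\<eta>*(B + Kc)" using eta_pos by (simp add: divide_le_eq mult.commute)
    then show ?thesis by (rule real_le_rsqrt)
  qed
  have Phi_lb: "- Kc \<le> \<Phi> z" for z
  proof -
    have "0 \<le> (norm z)\<^sup>2/(8*\<eta>)" using eta_pos by simp
    then show ?thesis using Phi_coer[of z] by linarith
  qed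
  have h_cont: "continuous_on UNIV (h m)" if m: "m \<in> {1..M}" for m
  proof -
    from h_C2[OF m] obtain Dh :: "(real^'k^'j) \<Rightarrow> ((real^'k^'j) \<Rightarrow>\<^sub>L real)" where
      "\<forall>x. (h m has_derivative blinfun_apply (Dh x)) (at x)" unfolding twice_cont_diff_def by blast
    then show ?thesis by (intro has_derivative_continuous_on) auto
  qed
  have h_mid: "h m ((1/2) *\<^sub>R (a+b)) \<le> (h m a + h m b)/2" if m: "m \<in> {1..M}" for m a b
    using convex_onD[OF h_convex[OF m], of "1/2" a b] by (simp add: scaleR_right_distrib)
  obtain xs where xs: "xs \<in> W" "\<forall>y\<in>W. \<Phi> xs \<le> \<Phi> y"
    using continuous_attains_inf[OF W_compact W_nonempty] Phi_cont continuous_on_subset by blast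
  have mid_W: "(1/2) *\<^sub>R (a+b) \<in> W" if "a \<in> W" "b \<in> W" for a b
    using convexD[OF W_convex that, of "1/2" "1/2"] by (simp add: scaleR_right_distrib)
  have arg_W: "argmin_on W \<Phi> = xs"
    by (rule argmin_eq[OF xs]) (use mid_W Phi_strict in auto)
  have xs_uniq: "k = xs" if "k \<in> W" "\<Phi> k \<le> \<Phi> xs" for k
  proof (rule ccontr)
    assume "k \<noteq> xs"
    then have "\<Phi> ((1/2) *\<^sub>R (k+xs)) < (\<Phi> k + \<Phi> xs)/2" by (rule Phi_strict)
    moreover have "\<Phi> xs \<le> \<Phi> ((1/2) *\<^sub>R (k+xs))" using xs mid_W[OF that(1) xs(1)] by blast
    ultimately show False using that(2) by argo
  qed
  have hxs: "h m xs \<le> 0" if "m \<in> {1..M}" for m using xs(1) that unfolding W_def by auto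
  have F_cont: "continuous_on UNIV (F l)" for l
  proof -
    have "continuous_on UNIV (\<lambda>z. sp (l * h m z))" if m: "m \<in> {1..M}" for m
      unfolding sp_def
      by (intro continuous_intros h_cont[OF m]) (auto simp: sp_nz)
    then show ?thesis unfolding F_def by (intro continuous_intros Phi_cont) auto
  qed
  have F_ge_Phi: "\<Phi> z \<le> F l z" for l z
    unfolding F_def using sp_pos by (simp add: sp_def sum_nonneg less_imp_le)
  have F_mid: "F l ((1/2) *\<^sub>R (a+b)) < (F l a + F l b)/2" if l: "0 \<le> l" and ab: "a \<noteq> b" for l a b
  proof -
    have "(\<Sum>m=1..M. sp (l * h m ((1/2) *\<^sub>R (a+b)))) \<le> (\<Sum>m=1..M. (sp (l * h m a) + sp (l * h m b)) / 2)"
    proof (rule sum_mono)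
      fix m assume m: "m \<in> {1..M}"
      have "l * h m ((1/2) *\<^sub>R (a+b)) \<le> (l * h m a + l * h m b) / 2"
        using mult_left_mono[OF h_mid[OF m, of a b] l] by (simp add: algebra_simps)
      then have "sp (l * h m ((1/2) *\<^sub>R (a+b))) \<le> sp ((l * h m a + l * h m b) / 2)"
        unfolding sp_def by (rule sp_mono)
      also have "\<dots> \<le> (sp (l * h m a) + sp (l * h m b)) / 2" unfolding sp_def by (rule sp_mid)
      finally show "sp (l * h m ((1/2) *\<^sub>R (a+b))) \<le> (sp (l * h m a) + sp (l * h m b)) / 2" .
    qed
    also have "\<dots> = ((\<Sum>m=1..M. sp (l * h m a)) + (\<Sum>m=1..M. sp (l * h m b))) / 2"
      by (simp add: sum.distrib flip: sum_divide_distrib)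
    finally show ?thesis using Phi_strict[OF ab] unfolding F_def by argo
  qed
  have F_min: "\<exists>z. \<forall>y. F l z \<le> F l y" for l
  proof (rule exists_min[OF F_cont, where zb = xs and r = "sqrt (8*\<eta>*(F l xs + Kc))"])
    fix z assume "F l z \<le> F l xs"
    then have "\<Phi> z \<le> F l xs" using F_ge_Phi[of z l] by linarith
    then show "norm z \<le> sqrt (8*\<eta>*(F l xs + Kc))" by (rule Phi_bdd)
  qed
  define zl where "zl l = argmin_on UNIV (F l)" for l
  have zl_min: "F l (zl l) \<le> F l y" if l: "0 \<le> l" for l y
  proof -
    obtain z where z: "\<forall>y. F l z \<le> F l y" using F_min by blast
    have "argmin_on UNIV (F l) = z"
      by (rule argmin_eq) (use z F_mid[OF l] in auto)
    then show ?thesis using z unfolding zl_def by simp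
  qed
  define B0 where "B0 = \<Phi> xs + real M * ln 2"
  have F_xs: "F l xs \<le> B0" if l: "0 \<le> l" for l
  proof -
    have "(\<Sum>m=1..M. sp (l * h m xs)) \<le> (\<Sum>m=1..M. ln 2)"
    proof (rule sum_mono)
      fix m assume m: "m \<in> {1..M}"
      have "l * h m xs \<le> 0" using mult_nonneg_nonpos[OF l hxs[OF m]] .
      then show "sp (l * h m xs) \<le> ln 2" unfolding sp_def by (rule sp_le_ln2)
    qed
    then show ?thesis unfolding F_def B0_def by simp
  qed
  have Phi_zl: "\<Phi> (zl l) \<le> B0" if "0 \<le> l" for l
    using F_ge_Phi[of "zl l" l] zl_min[OF that, of xs] F_xs[OF that] by linarith
  define R where "R = sqrt (8*\<eta>*(B0 + Kc))"
  have zl_bdd: "norm (zl l) \<le> R" if "0 \<le> l" for l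
    unfolding R_def by (rule Phi_bdd[OF Phi_zl[OF that]])
  define B1 where "B1 = B0 + Kc"
  have h_zl: "h m (zl l) \<le> B1 / l" if l: "0 < l" and m: "m \<in> {1..M}" for l m
  proof -
    have "l * h m (zl l) \<le> sp (l * h m (zl l))" unfolding sp_def by (rule sp_ge)
    also have "\<dots> \<le> (\<Sum>m=1..M. sp (l * h m (zl l)))"
      by (rule member_le_sum[OF m]) (auto simp: sp_def less_imp_le[OF sp_pos])
    also have "\<dots> = F l (zl l) - \<Phi> (zl l)" unfolding F_def by simp
    also have "\<dots> \<le> B1" using zl_min[of l xs] F_xs[of l] Phi_lb[of "zl l"] l unfolding B1_def by linarith
    finally show ?thesis using l by (simp add: pos_le_divide_eq mult.commute)
  qed
  have key: "eventually (\<lambda>l. \<Phi> (zl l) < \<Phi> xs + \<delta>) at_top" if \<delta>: "\<delta> > 0" for \<delta>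
  proof -
    have "\<forall>m\<in>{1..M}. \<exists>D. (h m has_derivative D) (at xs)"
      using h_C2 unfolding twice_cont_diff_def by blast
    then obtain D where D: "\<And>m. m \<in> {1..M} \<Longrightarrow> (h m has_derivative D m) (at xs)" by metis
    have Dlin: "D m (c *\<^sub>R u) = c * D m u" if m: "m \<in> {1..M}" for m c u
      using has_derivative_linear[OF D[OF m]] by (simp add: linear_scale)
    have tang: "h m xs + D m (z - xs) \<le> h m z" if m: "m \<in> {1..M}" for m z
      by (rule tangent_below[OF h_convex[OF m] D[OF m]])
    define S where "S v = (\<Sum>m=1..M. if h m xs = 0 then sp (D m v) else 0)" for v
    have S_nn: "0 \<le> S v" for v
      unfolding S_def by (rule sum_nonneg) (auto simp: sp_def less_imp_le[OF sp_pos])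
    define c where "c = Inf (range S)"
    have c_le: "c \<le> S v" for v
      unfolding c_def by (rule cInf_lower) (auto intro: bdd_belowI[of _ 0] S_nn)
    obtain v where v: "S v < c + \<delta>/2"
      using cInf_lessD[of "range S" "c + \<delta>/2"] \<delta> unfolding c_def by auto
    have lower: "\<Phi> z + c \<le> F l z" if l: "0 < l" for l z
    proof -
      have "S (l *\<^sub>R (z - xs)) \<le> (\<Sum>m=1..M. sp (l * h m z))"
        unfolding S_def
      proof (rule sum_mono)
        fix m assume m: "m \<in> {1..M}"
        show "(if h m xs = 0 then sp (D m (l *\<^sub>R (z - xs))) else 0) \<le> sp (l * h m z)"
        proof (cases "h m xs = 0")
          case True
          have "D m (z - xs) \<le> h m z" using tang[OF m, of z] True by simp
          then have "D m (l *\<^sub>R (z - xs)) \<le> l * h m z"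
            using Dlin[OF m] l by (simp add: mult_left_mono)
          then show ?thesis using True unfolding sp_def by (simp add: sp_mono)
        next
          case False
          then show ?thesis by (simp add: sp_def less_imp_le[OF sp_pos])
        qed
      qed
      then show ?thesis using c_le[of "l *\<^sub>R (z - xs)"] unfolding F_def by linarith
    qed
    have inv0: "((\<lambda>l::real. inverse l) \<longlongrightarrow> 0) at_top"
      by (rule tendsto_inverse_0_at_top[OF filterlim_ident])
    have pt: "((\<lambda>l. xs + inverse l *\<^sub>R v) \<longlongrightarrow> xs) at_top"
      using tendsto_add[OF tendsto_const tendsto_scaleR[OF inv0 tendsto_const], of xs v] by simp
    have P1: "((\<lambda>l. \<Phi> (xs + inverse l *\<^sub>R v)) \<longlongrightarrow> \<Phi> xs) at_top"
      by (rule continuous_on_tendsto_compose[OF Phi_cont pt]) auto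
    have invat0: "filterlim (\<lambda>l::real. inverse l) (at 0) at_top"
      using filterlim_inverse_at_right_top filterlim_mono at_within_le_at by blast
    have P2: "((\<lambda>l. sp (l * h m (xs + inverse l *\<^sub>R v))) \<longlongrightarrow> (if h m xs = 0 then sp (D m v) else 0)) at_top"
      if m: "m \<in> {1..M}" for m
    proof (cases "h m xs = 0")
      case True
      have "((\<lambda>t. (h m (xs + t *\<^sub>R v) - h m xs) / t) \<longlongrightarrow> D m v) (at 0)"
        by (rule dir_deriv[OF D[OF m]])
      from filterlim_compose[OF this invat0]
      have "((\<lambda>l. (h m (xs + inverse l *\<^sub>R v) - h m xs) / inverse l) \<longlongrightarrow> D m v) at_top" .
      moreover have "(\<lambda>l. (h m (xs + inverse l *\<^sub>R v) - h m xs) / inverse l) = (\<lambda>l. l * h m (xs + inverse l *\<^sub>R v))"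
        using True by (simp add: divide_inverse mult.commute)
      ultimately have "((\<lambda>l. l * h m (xs + inverse l *\<^sub>R v)) \<longlongrightarrow> D m v) at_top" by simp
      then have "((\<lambda>l. ln (1 + exp (l * h m (xs + inverse l *\<^sub>R v)))) \<longlongrightarrow> ln (1 + exp (D m v))) at_top"
        by (intro tendsto_intros) (auto simp: sp_nz)
      then show ?thesis using True unfolding sp_def by simp
    next
      case False
      then have neg: "h m xs < 0" using hxs[OF m] by linarith
      have "((\<lambda>l. h m (xs + inverse l *\<^sub>R v)) \<longlongrightarrow> h m xs) at_top"
        by (rule continuous_on_tendsto_compose[OF h_cont[OF m] pt]) auto
      from filterlim_tendsto_neg_mult_at_bot[OF this neg filterlim_ident]
      have "filterlim (\<lambda>l. h m (xs + inverse l *\<^sub>R v) * l) at_bot at_top" .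
      from filterlim_compose[OF exp_at_bot this]
      have "((\<lambda>l. exp (h m (xs + inverse l *\<^sub>R v) * l)) \<longlongrightarrow> 0) at_top" .
      then have "((\<lambda>l. ln (1 + exp (h m (xs + inverse l *\<^sub>R v) * l))) \<longlongrightarrow> ln (1 + 0)) at_top"
        by (intro tendsto_intros) auto
      then show ?thesis using False unfolding sp_def by (simp add: mult.commute)
    qed
    have "((\<lambda>l. \<Phi> (xs + inverse l *\<^sub>R v) + (\<Sum>m=1..M. sp (l * h m (xs + inverse l *\<^sub>R v)))) \<longlongrightarrow> \<Phi> xs + S v) at_top"
      unfolding S_def by (intro tendsto_add P1 tendsto_sum P2) auto
    then have upper: "((\<lambda>l. F l (xs + inverse l *\<^sub>R v)) \<longlongrightarrow> \<Phi> xs + S v) at_top"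
      unfolding F_def .
    have ev1: "eventually (\<lambda>l. F l (xs + inverse l *\<^sub>R v) < \<Phi> xs + S v + \<delta>/2) at_top"
      using order_tendstoD(2)[OF upper, of "\<Phi> xs + S v + \<delta>/2"] \<delta> by simp
    show ?thesis using ev1 eventually_gt_at_top[of "0::real"]
    proof eventually_elim
      case (elim l)
      have "\<Phi> (zl l) + c \<le> F l (zl l)" using lower elim by blast
      also have "\<dots> \<le> F l (xs + inverse l *\<^sub>R v)" using zl_min elim by simp
      finally show ?case using elim v by linarith
    qed
  qed
  have conv: "eventually (\<lambda>l. dist (zl l) xs < \<epsilon>) at_top" if \<epsilon>: "\<epsilon> > 0" for \<epsilon>
  proof -
    define K where "K = cball 0 R \<inter> {z. \<epsilon> \<le> dist z xs}"
    have Kc: "compact K" unfolding K_def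
      by (intro compact_Int_closed compact_cball closed_Collect_le continuous_intros)
    define \<psi> where "\<psi> z = max (\<Phi> z - \<Phi> xs) (\<Sum>m=1..M. max (h m z) 0)" for z
    have \<psi>c0: "continuous_on UNIV \<psi>"
    proof -
      have "continuous_on UNIV (\<lambda>z. max (h m z) 0)" if m: "m \<in> {1..M}" for m
        by (intro continuous_intros h_cont[OF m])
      then show ?thesis unfolding \<psi>_def by (intro continuous_intros Phi_cont) (auto intro: h_cont)
    qed
    then have \<psi>c: "continuous_on K \<psi>" using continuous_on_subset by blast
    show ?thesis
    proof (cases "K = {}")
      case True
      show ?thesis using eventually_gt_at_top[of "0::real"]
      proof eventually_elim
        case (elim l)
        have "zl l \<in> cball 0 R" using zl_bdd[of l] elim by simp
        then show ?case using True unfolding K_def by auto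
      qed
    next
      case False
      obtain k where k: "k \<in> K" "\<forall>y\<in>K. \<psi> k \<le> \<psi> y"
        using continuous_attains_inf[OF Kc False \<psi>c] by blast
      have \<gamma>pos: "\<psi> k > 0"
      proof (rule ccontr)
        assume "\<not> \<psi> k > 0"
        then have a: "\<Phi> k \<le> \<Phi> xs" and b: "(\<Sum>m=1..M. max (h m k) 0) \<le> 0" unfolding \<psi>_def by auto
        have "(\<Sum>m=1..M. max (h m k) 0) = 0" using b by (simp add: antisym sum_nonneg)
        then have "\<forall>m\<in>{1..M}. max (h m k) 0 = 0"
          by (subst (asm) sum_nonneg_eq_0_iff) auto
        then have "k \<in> W" unfolding W_def by (auto simp: max_def split: if_splits)
        then have "k = xs" using xs_uniq a by blast
        then show False using k(1) \<epsilon> unfolding K_def by auto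
      qed
      have e2lim: "((\<lambda>l. real M * (\<bar>B1\<bar> / l)) \<longlongrightarrow> 0) at_top"
        by (intro tendsto_mult_right_zero tendsto_divide_0[OF tendsto_const]
            filterlim_at_top_imp_at_infinity[OF filterlim_ident])
      have e2: "eventually (\<lambda>l. real M * (\<bar>B1\<bar> / l) < \<psi> k) at_top"
        using order_tendstoD(2)[OF e2lim \<gamma>pos] .
      show ?thesis using key[OF \<gamma>pos] e2 eventually_gt_at_top[of "0::real"]
      proof eventually_elim
        case (elim l)
        have "(\<Sum>m=1..M. max (h m (zl l)) 0) \<le> (\<Sum>m=1..M. \<bar>B1\<bar> / l)"
        proof (rule sum_mono)
          fix m assume m: "m \<in> {1..M}"
          have "B1 / l \<le> \<bar>B1\<bar> / l" using elim by (simp add: divide_right_mono)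
          then show "max (h m (zl l)) 0 \<le> \<bar>B1\<bar> / l" using h_zl[of l m] m elim by simp
        qed
        then have "\<psi> (zl l) < \<psi> k" using elim unfolding \<psi>_def by simp
        then have "zl l \<notin> K" using k by force
        moreover have "zl l \<in> cball 0 R" using zl_bdd[of l] elim by simp
        ultimately show ?case unfolding K_def by auto
      qed
    qed
  qed
  have "(zl \<longlongrightarrow> xs) at_top" unfolding tendsto_iff using conv by simp
  moreover have "(\<lambda>l. argmin_on UNIV (\<lambda>z. \<Phi> z + (\<Sum>m=1..M. ln (1 + exp (l * h m z))))) = zl"
    unfolding zl_def F_def sp_def by simp
  ultimately show ?thesis using arg_W by simp
qed

end
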